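(* Let $F\in\mathcal{DM}^\infty(H\Omega)$ and let $E\Subset\Omega$ be a set of finite h-perimeter in $\Omega$. Then $$\operatorname{div}F(E^{1,F})=\int_{\partial^*_HE}\mathrm{Tr}_i(F,\partial^*_HE)\,d|D_H\chi_E|,\qquad \operatorname{div}F(E^{1,F}\cup\partial^*_HE)=\int_{\partial^*_HE}\mathrm{Tr}_e(F,\partial^*_HE)\,d|D_H\chi_E|.$$
   Context: Setting and notation. $\mathbb G$ is a stratified group: a connected, simply connected nilpotent Lie group whose Lie algebra admits a stratification $\mathfrak g=V_1\oplus\cdots\oplus V_\iota$ with $[V_1,V_j]=V_{j+1}$, $V_\iota\neq\{0\}$, $V_{\iota+1}=\{0\}$; via exponential (graded) coordinates $\mathbb G$ is identified with $\mathbb R^q$. $X_1,\dots,X_m$ ($m=\dim V_1$) are the left invariant horizontal vector fields agreeing at $0$ with a graded basis of $V_1$; horizontal fibres $H_p\mathbb G=\mathrm{span}\{X_1(p),\dots,X_m(p)\}$ carry the left invariant scalar product $\langle\cdot,\cdot\rangle$ making $X_1,\dots,X_m$ orthonormal, norm $|\cdot|$. The Haar measure $\mu$ is $\mathcal L^q$ ($dx$). $d$ is a fixed homogeneous distance, $B(x,r)=\{y:d(y,x)<r\}$. $\Omega\subset\mathbb G$ is open. Horizontal calculus. For a function $\varphi$, $\nabla_H\varphi=\sum_{j=1}^m(X_j\varphi)X_j$. A horizontal field is a measurable section $F=\sum_{j=1}^mF_jX_j$ of $H\Omega$; $L^p(H\Omega)$ those with $|F|\in L^p(\Omega)$; $C^1_c(H\Omega)$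 those with $C^1$ compactly supported coefficients. The divergence of $F\in L^1_{loc}(H\Omega)$ is the distribution $\varphi\mapsto-\int_\Omega\langle F,\nabla_H\varphi\rangle\,dx$. $\mathcal{DM}^p(H\Omega)$ is the space of $F\in L^p(H\Omega)$ whose divergence is a finite signed Radon measure $\operatorname{div}F$ on $\Omega$. BV and perimeter. For $f\in L^1_{loc}(\Omega)$ let $|D_Hf|(\Omega)=\sup\{\int_\Omega f\operatorname{div}\phi\,dx:\phi\in C^1_c(H\Omega),|\phi|\le1\}$. If finite, $|D_Hf|$ is a finite Radon measure and there is a $|D_Hf|$-measurable horizontal section $\sigma_f$ with $|\sigma_f|=1$ a.e. and $\int f\operatorname{div}\phi\,dx=-\int\langle\phi,\sigma_f\rangle\,d|D_Hf|$. $E$ has finite h-perimeter in $\Omega$ if $|D_H\chi_E|(\Omega)<\infty$; $\nu_E=-\sigma_{\chi_E}$ is the measure theoretic exterior horizontal normal. The reduced boundary $\partial^*_HE$ is the set of $x$ with $|D_H\chi_E|(B(x,r))>0$ for all $r>0$ such that $\lim_{r\to0}|D_H\chi_E|(B(x,r))^{-1}\int_{B(x,r)}\nu_E\,d|D_H\chi_E|$ exists and has norm $1$. Normal traces. For $F\in\mathcal{DM}^\infty(H\Omega)$ and $E\subset\Omega$ of finite h-perimeter in $\Omega$, there exist (as established in the paper) a $|\operatorname{div}F|$-measurable set $E^{1,F}\subset\Omega\setminus\partial^*_HE$, unique up to $|\operatorname{div}F|$-null sets, and functions $\mathrm{Tr}_i(F,\partial^*_HE),\mathrm{Tr}_e(F,\partial^*_HE)\in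 L^\infty(\partial^*_HE;|D_H\chi_E|)$, unique up to $|D_H\chi_E|$-null sets, such that as measures on $\Omega$: $\operatorname{div}(\chi_EF)=\chi_{E^{1,F}}\operatorname{div}F-\mathrm{Tr}_i(F,\partial^*_HE)|D_H\chi_E|$ and $\operatorname{div}(\chi_EF)=\chi_{E^{1,F}\cup\partial^*_HE}\operatorname{div}F-\mathrm{Tr}_e(F,\partial^*_HE)|D_H\chi_E|$. $E^{1,F}$ is the measure theoretic interior of $E$ with respect to $F$; $\mathrm{Tr}_i,\mathrm{Tr}_e$ are the interior and exterior normal traces. *)

theory Defs
  imports "HOL-Analysis.Analysis"
begin

text \<open>The Lie algebra is modelled on real^'n with Lie bracket br; the coordinate
  axis vectors form a graded basis, coordinate i having degree deg i.
  V_k is the span of the basis vectors of degree k.\<close>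

definition layer :: "('n::finite \<Rightarrow> nat) \<Rightarrow> nat \<Rightarrow> (real^'n) set" where
  "layer deg k = span {axis i 1 | i. deg i = k}"

definition step :: "('n::finite \<Rightarrow> nat) \<Rightarrow> nat" where
  "step deg = Max (range deg)"

definition stratified ::
  "(real^'n::finite \<Rightarrow> real^'n \<Rightarrow> real^'n) \<Rightarrow> ('n \<Rightarrow> nat) \<Rightarrow> bool" where
  "stratified br deg \<longleftrightarrow>
     bilinear br \<and>
     (\<forall>x y. br x y = - br y x) \<and>
     (\<forall>x y z. br x (br y z) + br y (br z x) + br z (br x y) = 0) \<and>
     (\<forall>i. deg i \<ge> 1) \<and>
     (\<forall>j\<ge>1. span {br v w | v w. v \<in> layer deg 1 \<and> w \<in> layer deg j} = layer deg (Suc j))"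

text \<open>Right-nested bracket of a word in the letters X (True) and Y (False).\<close>
fun nestbr :: "('v \<Rightarrow> 'v \<Rightarrow> 'v) \<Rightarrow> 'v \<Rightarrow> 'v \<Rightarrow> bool list \<Rightarrow> 'v::zero" where
  "nestbr b x y [] = 0"
| "nestbr b x y [a] = (if a then x else y)"
| "nestbr b x y (a # w) = b (if a then x else y) (nestbr b x y w)"

definition dynkin_terms :: "nat \<Rightarrow> (nat \<times> nat) list set" where
  "dynkin_terms N = {ps. ps \<noteq> [] \<and> (\<forall>p\<in>set ps. fst p + snd p \<ge> 1)
                        \<and> sum_list (map (\<lambda>p. fst p + snd p) ps) \<le> N}"

definition dynkin_word :: "(nat \<times> nat) list \<Rightarrow> bool list" where
  "dynkin_word ps = concat (map (\<lambda>(r, s). replicate r True @ replicate s False) ps)"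

definition dynkin_coeff :: "(nat \<times> nat) list \<Rightarrow> real" where
  "dynkin_coeff ps = (-1) ^ (length ps - 1) /
     (real (length ps) * real (sum_list (map (\<lambda>p. fst p + snd p) ps))
       * (\<Prod>p\<leftarrow>ps. fact (fst p) * fact (snd p)))"

text \<open>Group law in exponential coordinates: Baker-Campbell-Hausdorff series
  (Dynkin's form), truncated at the step (it is exact for a nilpotent algebra of that step).\<close>
definition gmul ::
  "(real^'n::finite \<Rightarrow> real^'n \<Rightarrow> real^'n) \<Rightarrow> ('n \<Rightarrow> nat) \<Rightarrow> real^'n \<Rightarrow> real^'n \<Rightarrow> real^'n" where
  "gmul br deg x y = (\<Sum>ps\<in>dynkin_terms (step deg). dynkin_coeff ps *\<^sub>R nestbr br x y (dynkin_word ps))"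

definition dil :: "('n::finite \<Rightarrow> nat) \<Rightarrow> real \<Rightarrow> real^'n \<Rightarrow> real^'n" where
  "dil deg t x = (\<chi> i. t ^ deg i * x $ i)"

definition hom_dist ::
  "(real^'n::finite \<Rightarrow> real^'n \<Rightarrow> real^'n) \<Rightarrow> ('n \<Rightarrow> nat) \<Rightarrow> (real^'n \<Rightarrow> real^'n \<Rightarrow> real) \<Rightarrow> bool" where
  "hom_dist br deg d \<longleftrightarrow>
     (\<forall>x y. d x y = 0 \<longleftrightarrow> x = y) \<and> (\<forall>x y. d x y = d y x) \<and>
     (\<forall>x y z. d x z \<le> d x y + d y z) \<and>
     continuous_on UNIV (\<lambda>p. d (fst p) (snd p)) \<and>
     (\<forall>x y z. d (gmul br deg z x) (gmul br deg z y) = d x y) \<and>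
     (\<forall>t>0. \<forall>x y. d (dil deg t x) (dil deg t y) = t * d x y)"

text \<open>Horizontal indices: coordinates of degree 1. X_j acts on a function g by
  (X_j g)(p) = d/dt g(p * exp(t e_j)) at t = 0; in exponential coordinates exp(t e_j) = t e_j.\<close>
definition Xd ::
  "(real^'n::finite \<Rightarrow> real^'n \<Rightarrow> real^'n) \<Rightarrow> ('n \<Rightarrow> nat) \<Rightarrow> 'n \<Rightarrow> (real^'n \<Rightarrow> real) \<Rightarrow> real^'n \<Rightarrow> real" where
  "Xd br deg j g p = deriv (\<lambda>t. g (gmul br deg p (t *\<^sub>R axis j 1))) 0"

text \<open>Horizontal sections are represented by maps into real^'n whose non-horizontal
  coordinates vanish; coordinate j (deg j = 1) is the coefficient of X_j, so the
  Euclidean norm / inner product coincide with the left invariant ones.\<close>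
definition horizontal :: "('n::finite \<Rightarrow> nat) \<Rightarrow> real^'n \<Rightarrow> bool" where
  "horizontal deg v \<longleftrightarrow> (\<forall>i. deg i \<noteq> 1 \<longrightarrow> v $ i = 0)"

definition hpair ::
  "(real^'n::finite \<Rightarrow> real^'n \<Rightarrow> real^'n) \<Rightarrow> ('n \<Rightarrow> nat) \<Rightarrow> (real^'n \<Rightarrow> real^'n) \<Rightarrow> (real^'n \<Rightarrow> real) \<Rightarrow> real^'n \<Rightarrow> real" where
  "hpair br deg F g x = (\<Sum>j\<in>{j. deg j = 1}. F x $ j * Xd br deg j g x)"

definition hdiv ::
  "(real^'n::finite \<Rightarrow> real^'n \<Rightarrow> real^'n) \<Rightarrow> ('n \<Rightarrow> nat) \<Rightarrow> (real^'n \<Rightarrow> real^'n) \<Rightarrow> real^'n \<Rightarrow> real" where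
  "hdiv br deg \<phi> x = (\<Sum>j\<in>{j. deg j = 1}. Xd br deg j (\<lambda>y. \<phi> y $ j) x)"

definition C1c :: "(real^'n::finite) set \<Rightarrow> (real^'n \<Rightarrow> real) \<Rightarrow> bool" where
  "C1c U g \<longleftrightarrow>
     (\<exists>D. (\<forall>x. (g has_derivative (\<lambda>h. D x \<bullet> h)) (at x)) \<and> continuous_on UNIV D) \<and>
     compact (closure {x. g x \<noteq> 0}) \<and> closure {x. g x \<noteq> 0} \<subseteq> U"

definition C1c_hfield :: "('n::finite \<Rightarrow> nat) \<Rightarrow> (real^'n) set \<Rightarrow> (real^'n \<Rightarrow> real^'n) \<Rightarrow> bool" where
  "C1c_hfield deg U \<phi> \<longleftrightarrow> (\<forall>x. horizontal deg (\<phi> x)) \<and> (\<forall>i. C1c U (\<lambda>x. \<phi> x $ i))"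

definition hvar ::
  "(real^'n::finite \<Rightarrow> real^'n \<Rightarrow> real^'n) \<Rightarrow> ('n \<Rightarrow> nat) \<Rightarrow> (real^'n \<Rightarrow> real) \<Rightarrow> (real^'n) set \<Rightarrow> ennreal" where
  "hvar br deg f U = (SUP \<phi>\<in>{\<phi>. C1c_hfield deg U \<phi> \<and> (\<forall>x. norm (\<phi> x) \<le> 1)}.
                        ennreal (\<integral>x. f x * hdiv br deg \<phi> x \<partial>lebesgue))"

definition hvar_measure ::
  "(real^'n::finite \<Rightarrow> real^'n \<Rightarrow> real^'n) \<Rightarrow> ('n \<Rightarrow> nat) \<Rightarrow> (real^'n) set \<Rightarrow> (real^'n \<Rightarrow> real) \<Rightarrow> (real^'n) measure" where
  "hvar_measure br deg \<Omega> f = measure_of \<Omega> (sets (restrict_space lborel \<Omega>))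
      (\<lambda>A. INF U\<in>{U. open U \<and> A \<subseteq> U \<and> U \<subseteq> \<Omega>}. hvar br deg f U)"

text \<open>Reduced boundary, relative to the variation measure lam of chi_E and
  the exterior normal nu.\<close>
definition red_bdry ::
  "(real^'n::finite) set \<Rightarrow> (real^'n \<Rightarrow> real^'n \<Rightarrow> real) \<Rightarrow> (real^'n) measure \<Rightarrow> (real^'n \<Rightarrow> real^'n) \<Rightarrow> (real^'n) set" where
  "red_bdry \<Omega> d lam \<nu> = {x\<in>\<Omega>.
      (\<forall>r>0. measure lam ({y. d y x < r} \<inter> \<Omega>) > 0) \<and>
      (\<exists>v. ((\<lambda>r. (1 / measure lam ({y. d y x < r} \<inter> \<Omega>)) *\<^sub>R
                  (\<integral>y\<in>{y. d y x < r} \<inter> \<Omega>. \<nu> y \<partial>lam)) \<longlongrightarrow> v) (at_right 0)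
           \<and> norm v = 1)}"

text \<open>F \<in> DM^\<infinity>(H\<Omega>), with div F = mu_p - mu_n the Jordan decomposition
  (mu_p, mu_n finite Borel measures on \<Omega>, mutually singular).\<close>
definition DM_inf ::
  "(real^'n::finite \<Rightarrow> real^'n \<Rightarrow> real^'n) \<Rightarrow> ('n \<Rightarrow> nat) \<Rightarrow> (real^'n) set \<Rightarrow> (real^'n \<Rightarrow> real^'n)
     \<Rightarrow> (real^'n) measure \<Rightarrow> (real^'n) measure \<Rightarrow> bool" where
  "DM_inf br deg \<Omega> F mup mun \<longleftrightarrow>
     F \<in> borel_measurable lebesgue \<and> (\<forall>x\<in>\<Omega>. horizontal deg (F x)) \<and>
     (\<exists>C. AE x in lebesgue. x \<in> \<Omega> \<longrightarrow> norm (F x) \<le> C) \<and>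
     space mup = \<Omega> \<and> sets mup = sets (restrict_space lborel \<Omega>) \<and> finite_measure mup \<and>
     space mun = \<Omega> \<and> sets mun = sets (restrict_space lborel \<Omega>) \<and> finite_measure mun \<and>
     (\<exists>P\<in>sets mup. emeasure mup (\<Omega> - P) = 0 \<and> emeasure mun P = 0) \<and>
     (\<forall>g. C1c \<Omega> g \<longrightarrow>
        - (\<integral>x. indicator \<Omega> x * hpair br deg F g x \<partial>lebesgue)
          = (\<integral>x. g x \<partial>mup) - (\<integral>x. g x \<partial>mun))"

end

theory Submission
  imports Defs
begin



lemma bil_zero:
  assumes "bilinear b" shows "b 0 z = 0" "b z 0 = 0"
proof -
  have "linear (\<lambda>x. b x z)" "linear (b z)" using assms unfolding bilinear_def by auto
  from linear_0[OF this(1)] linear_0[OF this(2)] show "b 0 z = 0" "b z 0 = 0" by auto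
qed

lemma bil_self:
  assumes anti: "\<forall>x y. b x y = - b y x" shows "b x x = (0::'a::real_vector)"
proof -
  have h: "b x x = - b x x" using anti by blast
  have "2 *\<^sub>R b x x = b x x + b x x" by (simp add: scaleR_2)
  also have "\<dots> = 0" using h by (metis neg_eq_iff_add_eq_0)
  finally show ?thesis by simp
qed

lemma nestbr_zero:
  assumes b: "bilinear b" and anti: "\<forall>x y. b x y = - b y x"
  shows "nestbr b x 0 w = (if w = [True] then x else (0::'a::real_vector))"
proof (induction w)
  case (Cons a w)
  show ?case
  proof (cases w)
    case Nil then show ?thesis by auto
  next
    case (Cons c u)
    then have "nestbr b x 0 (a # w) = b (if a then x else 0) (nestbr b x 0 w)" by simp
    also have "\<dots> = 0" 
    proof (cases "w = [True]")
      case True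
      then have "nestbr b x 0 w = x" using Cons.IH by simp
      then show ?thesis using bil_zero[OF b] bil_self[OF anti, of x] by simp
    next
      case False
      then have "nestbr b x 0 w = 0" using Cons.IH by simp
      then show ?thesis using bil_zero[OF b] by simp
    qed
    finally show ?thesis using Cons by simp
  qed
qed simp


lemma dynkin_word_length:
  "length (dynkin_word ps) = sum_list (map (\<lambda>p. fst p + snd p) ps)"
  by (induction ps) (auto simp: dynkin_word_def)

lemma sum_list_ge_length:
  assumes "\<forall>p\<in>set ps. fst p + snd p \<ge> (1::nat)"
  shows "length ps \<le> sum_list (map (\<lambda>p. fst p + snd p) ps)"
  using assms by (induction ps) auto

lemma dt_iff: "ps \<in> dynkin_terms N \<longleftrightarrow> ps \<noteq> [] \<and> (\<forall>p\<in>set ps. fst p + snd p \<ge> 1)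
                        \<and> sum_list (map (\<lambda>p. fst p + snd p) ps) \<le> N"
  unfolding dynkin_terms_def by (rule mem_Collect_eq)

lemma dynkin_word_single:
  assumes "ps \<in> dynkin_terms N"
  shows "dynkin_word ps = [True] \<longleftrightarrow> ps = [(1,0)]"
proof
  assume w: "dynkin_word ps = [True]"
  have ne: "ps \<noteq> []" and ge: "\<forall>p\<in>set ps. fst p + snd p \<ge> 1" using assms unfolding dt_iff by blast+
  obtain p qs where ps: "ps = p # qs" using ne by (cases ps) blast+
  have "sum_list (map (\<lambda>p. fst p + snd p) ps) = 1" using w dynkin_word_length[of ps] by simp
  moreover have "fst p + snd p \<ge> 1" using ge ps by simp
  moreover have "sum_list (map (\<lambda>p. fst p + snd p) ps) = fst p + snd p + sum_list (map (\<lambda>p. fst p + snd p) qs)"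
    using ps by simp
  ultimately have s: "sum_list (map (\<lambda>p. fst p + snd p) qs) = 0" "fst p + snd p = 1" by linarith+
  have "length qs \<le> 0" using sum_list_ge_length[of qs] ge ps s(1) by simp
  then have qs: "qs = []" by simp
  obtain r s' where p: "p = (r, s')" by (cases p)
  have rs: "r + s' = 1" using s(2) p by simp
  have "replicate r True @ replicate s' False = [True]" using w ps qs p by (simp add: dynkin_word_def)
  moreover have "r = 1 \<and> s' = 0 \<or> r = 0 \<and> s' = 1" using rs by linarith
  ultimately have "r = 1 \<and> s' = 0" by auto
  then show "ps = [(1,0)]" using ps qs p by simp
qed (simp add: dynkin_word_def)

lemma finite_dynkin_terms: "finite (dynkin_terms N)"
proof (rule finite_subset)
  show "dynkin_terms N \<subseteq> {xs. set xs \<subseteq> {0..N}\<times>{0..N} \<and> length xs \<le> N}"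
  proof
    fix ps assume ps: "ps \<in> dynkin_terms N"
    then have ge: "\<forall>p\<in>set ps. fst p + snd p \<ge> 1" and le: "sum_list (map (\<lambda>p. fst p + snd p) ps) \<le> N"
      unfolding dt_iff by blast+
    have "length ps \<le> N" using sum_list_ge_length[OF ge] le by linarith
    moreover have "set ps \<subseteq> {0..N}\<times>{0..N}"
    proof
      fix p assume "p \<in> set ps"
      then have "fst p + snd p \<le> sum_list (map (\<lambda>p. fst p + snd p) ps)"
        by (simp add: member_le_sum_list)
      then have "fst p \<le> N" "snd p \<le> N" using le by linarith+
      then show "p \<in> {0..N}\<times>{0..N}" by (simp add: mem_Times_iff)
    qed
    ultimately show "ps \<in> {xs. set xs \<subseteq> {0..N}\<times>{0..N} \<and> length xs \<le> N}" by blast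
  qed
  show "finite {xs. set xs \<subseteq> {0..N}\<times>{0..N} \<and> length xs \<le> N}"
    by (rule finite_lists_length_le) blast
qed
lemma step_ge1: fixes deg :: "'n::finite \<Rightarrow> nat" assumes "stratified br deg" shows "step deg \<ge> 1"
proof -
  define i where "i = (undefined::'n)"
  have "\<forall>i. deg i \<ge> 1" using assms unfolding stratified_def by blast
  then have "deg i \<ge> 1" by blast
  moreover have "deg i \<le> Max (range deg)" by (rule Max_ge) auto
  ultimately show ?thesis unfolding step_def by linarith
qed

lemma gmul_zero:
  assumes G: "stratified br deg" shows "gmul br deg x 0 = x"
proof -
  have b: "bilinear br" and anti: "\<forall>x y. br x y = - br y x" using G unfolding stratified_def by blast+
  let ?T = "dynkin_terms (step deg)"
  have mem: "[(1,0)] \<in> ?T" using step_ge1[OF G] by (simp add: dynkin_terms_def)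
  have "gmul br deg x 0 = (\<Sum>ps\<in>?T. (if ps = [(1,0)] then x else 0))"
    unfolding gmul_def
  proof (rule sum.cong[OF refl])
    fix ps assume ps: "ps \<in> ?T"
    show "dynkin_coeff ps *\<^sub>R nestbr br x 0 (dynkin_word ps) = (if ps = [(1,0)] then x else 0)"
    proof (cases "ps = [(1,0)]")
      case True
      have "dynkin_word ps = [True]" using True by (simp add: dynkin_word_def)
      then have "nestbr br x 0 (dynkin_word ps) = x" using nestbr_zero[OF b anti] by simp
      moreover have "dynkin_coeff ps = 1" using True by (simp add: dynkin_coeff_def)
      ultimately show ?thesis using True by simp
    next
      case False
      then have "dynkin_word ps \<noteq> [True]" using dynkin_word_single[OF ps] by blast
      then have "nestbr br x 0 (dynkin_word ps) = 0" using nestbr_zero[OF b anti] by simp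
      then show ?thesis using False by simp
    qed
  qed
  also have "\<dots> = x" using mem finite_dynkin_terms by (simp add: sum.delta')
  finally show ?thesis .
qed

lemma nestbr_cont:
  assumes b: "bounded_bilinear b"
  shows "continuous_on UNIV (\<lambda>t::real. nestbr b x (t *\<^sub>R e) w)"
proof (induction w)
  case (Cons a w)
  note IH = Cons.IH
  show ?case
  proof (cases w)
    case Nil then show ?thesis by (cases a) (auto intro!: continuous_intros)
  next
    case (Cons c u)
    have eq: "(\<lambda>t::real. nestbr b x (t *\<^sub>R e) (a # w)) = (\<lambda>t. b (if a then x else t *\<^sub>R e) (nestbr b x (t *\<^sub>R e) w))"
      using Cons by auto
    have c1: "continuous_on UNIV (\<lambda>t::real. if a then x else t *\<^sub>R e)"
      by (cases a) (auto intro!: continuous_intros)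
    show ?thesis unfolding eq
      by (rule bounded_bilinear.continuous_on[OF b c1 IH])
  qed
qed simp

lemma gmul_cont:
  assumes G: "stratified br deg"
  shows "continuous_on UNIV (\<lambda>t::real. gmul br deg x (t *\<^sub>R e))"
proof -
  have "bilinear br" using G unfolding stratified_def by blast
  then have "bounded_bilinear br" by (simp add: bilinear_conv_bounded_bilinear)
  then show ?thesis unfolding gmul_def
    by (intro continuous_on_sum continuous_on_scaleR continuous_on_const nestbr_cont)
qed





definition C1fun :: "(real^'n::finite \<Rightarrow> real) \<Rightarrow> bool" where
  "C1fun g \<longleftrightarrow> (\<exists>D. (\<forall>x. (g has_derivative (\<lambda>h. D x \<bullet> h)) (at x)) \<and> continuous_on UNIV D)"

lemma C1fun_const: "C1fun (\<lambda>x. c)"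
  unfolding C1fun_def
  by (rule exI[of _ "\<lambda>_. 0"]) (auto intro!: has_derivative_eq_rhs[OF has_derivative_const] simp: fun_eq_iff)

lemma C1fun_add: assumes "C1fun f" "C1fun g" shows "C1fun (\<lambda>x. f x + g x)"
proof -
  obtain Df Dg where f: "\<forall>x. (f has_derivative (\<lambda>h. Df x \<bullet> h)) (at x)" "continuous_on UNIV Df"
    and g: "\<forall>x. (g has_derivative (\<lambda>h. Dg x \<bullet> h)) (at x)" "continuous_on UNIV Dg"
    using assms unfolding C1fun_def by blast
  show ?thesis unfolding C1fun_def
  proof (intro exI[of _ "\<lambda>x. Df x + Dg x"] conjI allI)
    fix x show "((\<lambda>x. f x + g x) has_derivative (\<lambda>h. (Df x + Dg x) \<bullet> h)) (at x)"
      using has_derivative_add[OF f(1)[rule_format, of x] g(1)[rule_format, of x]]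
      by (simp add: inner_add_left)
  qed (rule continuous_on_add[OF f(2) g(2)])
qed

lemma C1fun_mult: assumes "C1fun f" "C1fun g" shows "C1fun (\<lambda>x. f x * g x)"
proof -
  obtain Df Dg where f: "\<forall>x. (f has_derivative (\<lambda>h. Df x \<bullet> h)) (at x)" "continuous_on UNIV Df"
    and g: "\<forall>x. (g has_derivative (\<lambda>h. Dg x \<bullet> h)) (at x)" "continuous_on UNIV Dg"
    using assms unfolding C1fun_def by blast
  have "\<And>x. isCont f x" by (rule has_derivative_continuous[OF f(1)[rule_format]])
  then have cf1: "continuous_on UNIV f" by (simp add: continuous_at_imp_continuous_on)
  have "\<And>x. isCont g x" by (rule has_derivative_continuous[OF g(1)[rule_format]])
  then have cf2: "continuous_on UNIV g" by (simp add: continuous_at_imp_continuous_on)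
  note cf = cf1 cf2
  show ?thesis unfolding C1fun_def
  proof (intro exI[of _ "\<lambda>x. f x *\<^sub>R Dg x + g x *\<^sub>R Df x"] conjI allI)
    fix x show "((\<lambda>x. f x * g x) has_derivative (\<lambda>h. (f x *\<^sub>R Dg x + g x *\<^sub>R Df x) \<bullet> h)) (at x)"
      by (rule has_derivative_eq_rhs[OF has_derivative_mult[OF f(1)[rule_format, of x] g(1)[rule_format, of x]]])
         (simp add: fun_eq_iff inner_add_left mult.commute)
  qed (rule continuous_on_add[OF continuous_on_scaleR[OF cf(1) g(2)] continuous_on_scaleR[OF cf(2) f(2)]])
qed

lemma C1fun_scale: assumes "C1fun f" shows "C1fun (\<lambda>x. c * f x)"
  using C1fun_mult[OF C1fun_const assms] .

lemma C1fun_diff: assumes "C1fun f" "C1fun g" shows "C1fun (\<lambda>x. f x - g x)"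
  using C1fun_add[OF assms(1) C1fun_scale[OF assms(2), of "-1"]] by simp

lemma C1fun_prod: assumes "finite I" "\<And>i. i \<in> I \<Longrightarrow> C1fun (f i)" shows "C1fun (\<lambda>x. \<Prod>i\<in>I. f i x)"
  using assms
proof (induction I rule: finite_induct)
  case empty then show ?case by (simp add: C1fun_const)
next
  case (insert a I)
  then show ?case using C1fun_mult[of "f a" "\<lambda>x. \<Prod>i\<in>I. f i x"] by simp
qed

lemma C1fun_coord:
  assumes d: "\<And>t. (f has_real_derivative f' t) (at t)" and c: "continuous_on UNIV f'"
  shows "C1fun (\<lambda>x::real^'n::finite. f (x $ i))"
  unfolding C1fun_def
proof (intro exI[of _ "\<lambda>x. f' (x $ i) *\<^sub>R axis i 1"] conjI allI)
  fix x :: "real^'n"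
  have l: "((\<lambda>x::real^'n. x $ i) has_derivative (\<lambda>h. h $ i)) (at x)"
    by (rule bounded_linear_imp_has_derivative) (rule bounded_linear_vec_nth)
  show "((\<lambda>x. f (x $ i)) has_derivative (\<lambda>h. (f' (x $ i) *\<^sub>R axis i 1) \<bullet> h)) (at x)"
    using DERIV_compose_FDERIV[OF d l] by (simp add: inner_axis' mult.commute)
next
  have "continuous_on UNIV (\<lambda>x::real^'n. x $ i)" by (intro continuous_intros)
  then have "continuous_on UNIV (\<lambda>x::real^'n. f' (x $ i))"
    using continuous_on_compose2[OF c] by blast
  then show "continuous_on UNIV (\<lambda>x::real^'n. f' (x $ i) *\<^sub>R axis i (1::real))"
    by (intro continuous_intros)
qed

definition Pq :: "real \<Rightarrow> real" where "Pq t = (max 0 t)\<^sup>2"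

lemma Pq_deriv: "(Pq has_real_derivative 2 * max 0 t) (at t)"
proof (cases "t > 0")
  case True
  have ev: "eventually (\<lambda>s. Pq s = s\<^sup>2) (nhds t)"
    using eventually_nhds_in_open[of "{0<..}" t] True
    by (auto elim!: eventually_mono simp: Pq_def)
  have "((\<lambda>s. s\<^sup>2) has_real_derivative 2 * t) (at t)"
    by (auto intro!: derivative_eq_intros)
  then show ?thesis using DERIV_cong_ev[OF refl ev, of "2*t" "2 * max 0 t"] True by simp
next
  case False
  show ?thesis
  proof (cases "t < 0")
    case True
    have ev: "eventually (\<lambda>s. Pq s = 0) (nhds t)"
      using eventually_nhds_in_open[of "{..<0}" t] True
      by (auto elim!: eventually_mono simp: Pq_def)
    have "((\<lambda>s. 0::real) has_real_derivative 0) (at t)" by simp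
    then show ?thesis using DERIV_cong_ev[OF refl ev, of 0 "2 * max 0 t"] True by simp
  next
    case False
    then have t: "t = 0" using \<open>\<not> t > 0\<close> by simp
    have "((\<lambda>h. (Pq (0 + h) - Pq 0) / h) \<longlongrightarrow> 0) (at 0)"
    proof (rule Lim_null_comparison)
      show "eventually (\<lambda>h. norm ((Pq (0 + h) - Pq 0) / h) \<le> norm h) (at (0::real))"
      proof (rule always_eventually, rule allI)
        fix h :: real
        show "norm ((Pq (0 + h) - Pq 0) / h) \<le> norm h"
        proof (cases "h > 0")
          case True then show ?thesis by (simp add: Pq_def power2_eq_square)
        next
          case False then show ?thesis by (simp add: Pq_def)
        qed
      qed
      show "((\<lambda>h. norm h) \<longlongrightarrow> 0) (at (0::real))" by (intro tendsto_eq_intros) auto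
    qed
    then show ?thesis using t by (simp add: DERIV_def)
  qed
qed

lemma Pq_aff_deriv: "((\<lambda>t. Pq (c * t + d)) has_real_derivative c * (2 * max 0 (c * t + d))) (at t)"
proof -
  have "((\<lambda>t. c * t + d) has_real_derivative c) (at t)" by (auto intro!: derivative_eq_intros)
  from DERIV_chain2[OF Pq_deriv this] show ?thesis by (simp add: mult.commute)
qed

lemma C1fun_Pq: "C1fun (\<lambda>x::real^'n::finite. Pq (c * x $ i + d))"
  by (rule C1fun_coord[OF Pq_aff_deriv]) (intro continuous_intros)




definition Sp :: "real \<Rightarrow> real" where "Sp t = 2 * (Pq t - 2 * Pq (t - 1/2) + Pq (t - 1))"

lemma Sp_vals:
  shows "t \<le> 0 \<Longrightarrow> Sp t = 0" and "t \<ge> 1 \<Longrightarrow> Sp t = 1" and "0 \<le> Sp t" and "Sp t \<le> 1"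
proof -
  consider "t \<le> 0" | "0 \<le> t \<and> t \<le> 1/2" | "1/2 \<le> t \<and> t \<le> 1" | "1 \<le> t" by linarith
  then have "(t \<le> 0 \<longrightarrow> Sp t = 0) \<and> (t \<ge> 1 \<longrightarrow> Sp t = 1) \<and> 0 \<le> Sp t \<and> Sp t \<le> 1"
  proof cases
    case 1 then show ?thesis by (simp add: Sp_def Pq_def)
  next
    case 2
    then have e: "Sp t = 2 * t\<^sup>2" by (simp add: Sp_def Pq_def max_def)
    have z: "t \<le> 0 \<longrightarrow> Sp t = 0" using e 2 by auto
    note e
    moreover have "t\<^sup>2 \<le> (1/2)\<^sup>2" using 2 by (intro power_mono) auto
    then have "t\<^sup>2 \<le> 1/4" by (simp add: power2_eq_square)
    moreover have "t\<^sup>2 \<ge> 0" by simp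
    ultimately show ?thesis using 2 z by linarith
  next
    case 3
    then have "Sp t = 2 * (t\<^sup>2 - 2 * (t - 1/2)\<^sup>2)" by (simp add: Sp_def Pq_def max_def)
    also have "\<dots> = 1 - 2 * (1 - t)\<^sup>2" by (simp add: power2_eq_square algebra_simps)
    finally have e: "Sp t = 1 - 2 * (1 - t)\<^sup>2" .
    have "(1 - t)\<^sup>2 \<le> (1/2)\<^sup>2" using 3 by (intro power_mono) auto
    then have "(1 - t)\<^sup>2 \<le> 1/4" by (simp add: power2_eq_square)
    moreover have "(1 - t)\<^sup>2 \<ge> 0" by simp
    moreover have "t \<ge> 1 \<Longrightarrow> Sp t = 1" using e 3 by simp
    ultimately show ?thesis using e 3 by linarith
  next
    case 4
    then have "Sp t = 2 * (t\<^sup>2 - 2 * (t - 1/2)\<^sup>2 + (t - 1)\<^sup>2)" by (simp add: Sp_def Pq_def max_def)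
    also have "\<dots> = 1" by (simp add: power2_eq_square algebra_simps)
    finally show ?thesis using 4 by simp
  qed
  then show "t \<le> 0 \<Longrightarrow> Sp t = 0" and "t \<ge> 1 \<Longrightarrow> Sp t = 1" and "0 \<le> Sp t" and "Sp t \<le> 1" by auto
qed

lemma C1fun_Sp: "C1fun (\<lambda>x::real^'n::finite. Sp (c * x $ i + d))"
proof -
  have eq: "(\<lambda>x::real^'n. Sp (c * x $ i + d)) =
    (\<lambda>x. 2 * (Pq (c * x $ i + d) - 2 * Pq (c * x $ i + (d - 1/2)) + Pq (c * x $ i + (d - 1))))"
    by (simp add: Sp_def algebra_simps)
  show ?thesis unfolding eq
    by (intro C1fun_scale C1fun_add C1fun_diff C1fun_Pq)
qed

definition phi1 :: "real \<Rightarrow> real \<Rightarrow> real \<Rightarrow> real \<Rightarrow> real \<Rightarrow> real" where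
  "phi1 a a' b' b t = Sp ((t - a) / (a' - a)) * Sp ((b - t) / (b - b'))"

lemma C1fun_phi1: "C1fun (\<lambda>x::real^'n::finite. phi1 a a' b' b (x $ i))"
proof -
  have eq: "(\<lambda>x::real^'n. phi1 a a' b' b (x $ i)) =
     (\<lambda>x. Sp ((1/(a'-a)) * x $ i + (- a/(a'-a))) * Sp ((-1/(b-b')) * x $ i + b/(b-b')))"
    by (simp add: phi1_def diff_divide_distrib add_divide_distrib algebra_simps)
  show ?thesis unfolding eq by (intro C1fun_mult C1fun_Sp)
qed

lemma phi1_vals:
  assumes "a < a'" "b' < b"
  shows "t \<le> a \<Longrightarrow> phi1 a a' b' b t = 0" and "t \<ge> b \<Longrightarrow> phi1 a a' b' b t = 0"
    and "a' \<le> t \<Longrightarrow> t \<le> b' \<Longrightarrow> phi1 a a' b' b t = 1"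
    and "0 \<le> phi1 a a' b' b t" and "phi1 a a' b' b t \<le> 1"
proof -
  show "t \<le> a \<Longrightarrow> phi1 a a' b' b t = 0"
    using assms by (simp add: phi1_def Sp_vals(1) divide_nonpos_pos)
  show "t \<ge> b \<Longrightarrow> phi1 a a' b' b t = 0"
    using assms by (simp add: phi1_def Sp_vals(1) divide_nonpos_pos)
  show "a' \<le> t \<Longrightarrow> t \<le> b' \<Longrightarrow> phi1 a a' b' b t = 1"
    using assms by (simp add: phi1_def Sp_vals(2))
  show "0 \<le> phi1 a a' b' b t" by (simp add: phi1_def Sp_vals(3))
  show "phi1 a a' b' b t \<le> 1" by (simp add: phi1_def Sp_vals(3,4) mult_le_one)
qed

definition Hb :: "real^'n::finite \<Rightarrow> real^'n \<Rightarrow> real^'n \<Rightarrow> real^'n \<Rightarrow> real^'n \<Rightarrow> real" where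
  "Hb a a' b' b x = (\<Prod>i\<in>UNIV. phi1 (a$i) (a'$i) (b'$i) (b$i) (x$i))"

lemma C1fun_Hb: "C1fun (Hb a a' b' b)"
  unfolding Hb_def by (intro C1fun_prod C1fun_phi1) simp

lemma Hb_vals:
  assumes "\<forall>i. a$i < a'$i" "\<forall>i. b'$i < b$i"
  shows "x \<notin> box a b \<Longrightarrow> Hb a a' b' b x = 0"
    and "x \<in> cbox a' b' \<Longrightarrow> Hb a a' b' b x = 1"
    and "0 \<le> Hb a a' b' b x" and "Hb a a' b' b x \<le> 1"
proof -
  show "x \<notin> box a b \<Longrightarrow> Hb a a' b' b x = 0"
  proof -
    assume "x \<notin> box a b"
    then obtain i where "\<not> (a$i < x$i \<and> x$i < b$i)" by (auto simp: mem_box_cart)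
    then have "phi1 (a$i) (a'$i) (b'$i) (b$i) (x$i) = 0"
      using phi1_vals(1,2)[OF assms(1)[rule_format] assms(2)[rule_format]] by force
    then show ?thesis unfolding Hb_def by (intro prod_zero) auto
  qed
  show "x \<in> cbox a' b' \<Longrightarrow> Hb a a' b' b x = 1"
    unfolding Hb_def using phi1_vals(3)[OF assms(1)[rule_format] assms(2)[rule_format]]
    by (intro prod.neutral) (auto simp: mem_box_cart)
  show "0 \<le> Hb a a' b' b x" unfolding Hb_def
    using phi1_vals(4)[OF assms(1)[rule_format] assms(2)[rule_format]] by (intro prod_nonneg) auto
  show "Hb a a' b' b x \<le> 1" unfolding Hb_def
    using phi1_vals(4,5)[OF assms(1)[rule_format] assms(2)[rule_format]] by (intro prod_le_1) auto
qed




lemma C1fun_cont: assumes "C1fun g" shows "continuous_on UNIV g"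
proof -
  obtain D where D: "\<forall>x. (g has_derivative (\<lambda>h. D x \<bullet> h)) (at x)" using assms unfolding C1fun_def by blast
  have "\<And>x. isCont g x" by (rule has_derivative_continuous[OF D[rule_format]])
  then show ?thesis by (simp add: continuous_at_imp_continuous_on)
qed

lemma C1c_of:
  assumes "C1fun g" "{x. g x \<noteq> 0} \<subseteq> C" "compact C" "C \<subseteq> U"
  shows "C1c U g"
proof -
  have cl: "closure {x. g x \<noteq> 0} \<subseteq> C"
    using assms(2,3) compact_imp_closed closure_minimal by blast
  have "compact (closure {x. g x \<noteq> 0})"
    using cl assms(3) closed_closure compact_Int_closed[of C "closure {x. g x \<noteq> 0}"]
    by (simp add: Int_absorb1)
  then show ?thesis unfolding C1c_def using assms(1) cl assms(4) unfolding C1fun_def by blast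
qed

lemma t1:
  fixes K :: "(real^'n::finite) set"
  assumes \<Omega>: "open \<Omega>" and sub: "K \<subseteq> \<Omega>" and x: "x \<in> K"
  shows "\<exists>ab. cbox (fst ab) (snd ab) \<subseteq> \<Omega> \<and> x \<in> box (fst ab) (snd ab)"
proof -
  have "x \<in> \<Omega>" using sub x by blast
  from open_contains_cbox[OF \<Omega> this] obtain a b where "cbox a b \<subseteq> \<Omega>" "x \<in> box a b" .
  then show ?thesis by (intro exI[of _ "(a,b)"]) simp
qed

lemma plateau_exists:
  fixes K :: "(real^'n::finite) set"
  assumes K: "compact K" and \<Omega>: "open \<Omega>" and sub: "K \<subseteq> \<Omega>"
  obtains g V where "C1c \<Omega> g" "C1fun g" "open V" "K \<subseteq> V" "\<And>x. x \<in> V \<Longrightarrow> g x = 1"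
    "\<And>x. 0 \<le> g x" "\<And>x. g x \<le> 1"
proof -
  have "\<forall>x\<in>K. \<exists>ab. cbox (fst ab) (snd ab) \<subseteq> \<Omega> \<and> x \<in> box (fst ab) (snd ab)"
    using t1[OF \<Omega> sub] by blast
  from bchoice[OF this] obtain ab where
    ab0: "\<forall>x\<in>K. cbox (fst (ab x)) (snd (ab x)) \<subseteq> \<Omega> \<and> x \<in> box (fst (ab x)) (snd (ab x))"
    by (rule exE)
  have ab: "cbox (fst (ab x)) (snd (ab x)) \<subseteq> \<Omega> \<and> x \<in> box (fst (ab x)) (snd (ab x))" if "x \<in> K" for x
    using ab0 that by blast
  define A where "A x = fst (ab x)" for x
  define B where "B x = snd (ab x)" for x
  define A' where "A' x = (1/2) *\<^sub>R (A x + x)" for x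
  define B' where "B' x = (1/2) *\<^sub>R (x + B x)" for x
  have AB1: "cbox (A x) (B x) \<subseteq> \<Omega>" and AB0: "x \<in> box (A x) (B x)" if "x \<in> K" for x
    using ab[OF that] unfolding A_def B_def by blast+
  have AB2: "A x $ i < x $ i \<and> x $ i < B x $ i" if "x \<in> K" for x i
    using AB0[OF that] unfolding mem_box_cart by blast
  have A'c: "A' x $ i = (A x $ i + x $ i) / 2" for x i unfolding A'_def by simp
  have B'c: "B' x $ i = (x $ i + B x $ i) / 2" for x i unfolding B'_def by simp
  have A'B'1: "\<forall>i. A x $ i < A' x $ i" if "x \<in> K" for x
    using AB2[OF that] unfolding A'c by (simp add: field_simps)
  have A'B'2: "\<forall>i. B' x $ i < B x $ i" if "x \<in> K" for x
    using AB2[OF that] unfolding B'c by (simp add: field_simps)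
  have A'B'3: "x \<in> box (A' x) (B' x)" if "x \<in> K" for x
    using AB2[OF that] unfolding mem_box_cart A'c B'c by (simp add: field_simps)
  note A'B' = A'B'1 A'B'2 A'B'3
  note AB = AB1
  have "K \<subseteq> (\<Union>x\<in>K. box (A' x) (B' x))" using A'B'(3) by blast
  from compactE_image[OF K _ this] obtain F where F: "F \<subseteq> K" "finite F" "K \<subseteq> (\<Union>x\<in>F. box (A' x) (B' x))"
    by (metis open_box)
  define g where "g z = 1 - (\<Prod>x\<in>F. (1 - Hb (A x) (A' x) (B' x) (B x) z))" for z
  define V where "V = (\<Union>x\<in>F. box (A' x) (B' x))"
  have Fm: "x \<in> K" if "x \<in> F" for x using F(1) that by blast
  have C1: "C1fun g" unfolding g_def[abs_def]
    by (intro C1fun_diff C1fun_const C1fun_prod F(2) C1fun_Hb)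
  have bnd: "0 \<le> 1 - Hb (A x) (A' x) (B' x) (B x) z" "1 - Hb (A x) (A' x) (B' x) (B x) z \<le> 1" if "x \<in> F" for x z
    using Hb_vals(3,4)[OF A'B'1[OF Fm[OF that]] A'B'2[OF Fm[OF that]]] by auto
  have g01: "0 \<le> g z" "g z \<le> 1" for z
  proof -
    have "0 \<le> (\<Prod>x\<in>F. (1 - Hb (A x) (A' x) (B' x) (B x) z))" by (intro prod_nonneg) (use bnd in auto)
    moreover have "(\<Prod>x\<in>F. (1 - Hb (A x) (A' x) (B' x) (B x) z)) \<le> 1" by (intro prod_le_1) (use bnd in auto)
    ultimately show "0 \<le> g z" "g z \<le> 1" unfolding g_def by auto
  qed
  have gV: "g z = 1" if zV: "z \<in> V" for z
  proof -
    obtain x where x: "x \<in> F" "z \<in> box (A' x) (B' x)" using zV V_def by blast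
    then have "z \<in> cbox (A' x) (B' x)" using box_subset_cbox by blast
    then have "Hb (A x) (A' x) (B' x) (B x) z = 1" using Hb_vals(2)[OF A'B'1[OF Fm[OF x(1)]] A'B'2[OF Fm[OF x(1)]]] by blast
    then have "(\<Prod>x\<in>F. (1 - Hb (A x) (A' x) (B' x) (B x) z)) = 0" using x(1) F(2) by (intro prod_zero) auto
    then show ?thesis unfolding g_def by simp
  qed
  have supp: "{z. g z \<noteq> 0} \<subseteq> (\<Union>x\<in>F. cbox (A x) (B x))"
  proof
    fix z assume "z \<in> {z. g z \<noteq> 0}"
    then have "(\<Prod>x\<in>F. (1 - Hb (A x) (A' x) (B' x) (B x) z)) \<noteq> 1" unfolding g_def by simp
    then obtain x where x: "x \<in> F" "1 - Hb (A x) (A' x) (B' x) (B x) z \<noteq> 1"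
      using prod.neutral[of F "\<lambda>x. 1 - Hb (A x) (A' x) (B' x) (B x) z"] by blast
    then have "z \<in> box (A x) (B x)" using Hb_vals(1)[OF A'B'1[OF Fm[OF x(1)]] A'B'2[OF Fm[OF x(1)]]] by force
    then show "z \<in> (\<Union>x\<in>F. cbox (A x) (B x))" using x(1) box_subset_cbox by blast
  qed
  have "C1c \<Omega> g"
  proof (rule C1c_of[OF C1 supp])
    show "compact (\<Union>x\<in>F. cbox (A x) (B x))" using F(2) by (intro compact_UN) auto
    show "(\<Union>x\<in>F. cbox (A x) (B x)) \<subseteq> \<Omega>" using AB Fm by blast
  qed
  moreover have "open V" unfolding V_def by (intro open_UN) auto
  ultimately show ?thesis using that[of g V] C1 F(3) gV g01 V_def by blast
qed

lemma t_lim: "(\<lambda>k::nat. 1 / (4 + real k)) \<longlonglongrightarrow> 0"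
  by (rule tendsto_divide_0[OF tendsto_const filterlim_at_top_imp_at_infinity[OF
        filterlim_tendsto_add_at_top[OF tendsto_const filterlim_real_sequentially]]])

lemma box_approx:
  fixes a b :: "real^'n::finite"
  assumes ab: "\<forall>i. a$i < b$i"
  obtains h :: "nat \<Rightarrow> real^'n \<Rightarrow> real" where
   "\<And>k. C1fun (h k)" "\<And>k. \<exists>C. compact C \<and> C \<subseteq> box a b \<and> {x. h k x \<noteq> 0} \<subseteq> C"
   "\<And>k x. 0 \<le> h k x" "\<And>k x. h k x \<le> 1"
   "\<And>x. (\<lambda>k. h k x) \<longlonglongrightarrow> indicator (box a b) x"
proof -
  define t where "t k = 1 / (4 + real k)" for k :: nat
  have t0: "0 < t k" "t k \<le> 1/4" for k by (auto simp: t_def field_simps)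
  define A1 where "A1 k = a + t k *\<^sub>R (b - a)" for k
  define A2 where "A2 k = a + (2 * t k) *\<^sub>R (b - a)" for k
  define B2 where "B2 k = b - (2 * t k) *\<^sub>R (b - a)" for k
  define B1 where "B1 k = b - t k *\<^sub>R (b - a)" for k
  have c: "A1 k $ i = a$i + t k * (b$i - a$i)" "A2 k $ i = a$i + 2 * t k * (b$i - a$i)"
    "B2 k $ i = b$i - 2 * t k * (b$i - a$i)" "B1 k $ i = b$i - t k * (b$i - a$i)" for k i
    by (simp_all add: A1_def A2_def B1_def B2_def)
  have pos: "0 < t k * (b$i - a$i)" for k i using t0(1)[of k] ab by simp
  have o1: "\<forall>i. A1 k $ i < A2 k $ i" for k using pos unfolding c by (simp add: algebra_simps)
  have o2: "\<forall>i. B2 k $ i < B1 k $ i" for k using pos unfolding c by (simp add: algebra_simps)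
  define h where "h k = Hb (A1 k) (A2 k) (B2 k) (B1 k)" for k
  have sub: "cbox (A1 k) (B1 k) \<subseteq> box a b" for k
  proof
    fix x assume "x \<in> cbox (A1 k) (B1 k)"
    then have "\<forall>i. A1 k $ i \<le> x $ i \<and> x $ i \<le> B1 k $ i" unfolding mem_box_cart by blast
    have "a$i < x$i \<and> x$i < b$i" for i
    proof -
      have "A1 k $ i \<le> x $ i" "x $ i \<le> B1 k $ i" using \<open>\<forall>i. A1 k $ i \<le> x $ i \<and> x $ i \<le> B1 k $ i\<close> by blast+
      then show ?thesis unfolding c using pos[of k i] by linarith
    qed
    then show "x \<in> box a b" unfolding mem_box_cart by blast
  qed
  have zero: "h k x = 0" if "x \<notin> box a b" for k x
  proof -
    have "x \<notin> box (A1 k) (B1 k)" using that sub box_subset_cbox by blast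
    then show ?thesis unfolding h_def using Hb_vals(1)[OF o1 o2] by blast
  qed
  have L: "(\<lambda>k. h k x) \<longlonglongrightarrow> indicator (box a b) x" for x
  proof (cases "x \<in> box a b")
    case True
    then have xi: "a$i < x$i \<and> x$i < b$i" for i unfolding mem_box_cart by blast
    have "eventually (\<lambda>k. A2 k $ i \<le> x$i \<and> x$i \<le> B2 k $ i) sequentially" for i
    proof -
      have lim: "(\<lambda>k. 2 * t k * (b$i - a$i)) \<longlonglongrightarrow> 2 * 0 * (b$i - a$i)"
        unfolding t_def by (intro tendsto_intros t_lim)
      have m: "2 * 0 * (b$i - a$i) < min (x$i - a$i) (b$i - x$i)" using xi[of i] by simp
      show ?thesis using order_tendstoD(2)[OF lim m]
        by eventually_elim (auto simp: c)
    qed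
    then have "eventually (\<lambda>k. \<forall>i. A2 k $ i \<le> x$i \<and> x$i \<le> B2 k $ i) sequentially"
      by (rule eventually_all_finite)
    then have "eventually (\<lambda>k. h k x = 1) sequentially"
      by eventually_elim (auto simp: h_def mem_box_cart intro!: Hb_vals(2)[OF o1 o2])
    then have "(\<lambda>k. h k x) \<longlonglongrightarrow> 1" by (rule tendsto_eventually)
    then show ?thesis using True by simp
  next
    case False
    then show ?thesis using zero by simp
  qed
  have S: "\<exists>C. compact C \<and> C \<subseteq> box a b \<and> {x. h k x \<noteq> 0} \<subseteq> C" for k
  proof (intro exI[of _ "cbox (A1 k) (B1 k)"] conjI)
    show "{x. h k x \<noteq> 0} \<subseteq> cbox (A1 k) (B1 k)"
    proof
      fix x assume "x \<in> {x. h k x \<noteq> 0}"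
      then have "x \<in> box (A1 k) (B1 k)" unfolding h_def using Hb_vals(1)[OF o1 o2] by blast
      then show "x \<in> cbox (A1 k) (B1 k)" using box_subset_cbox by blast
    qed
  qed (auto simp: sub)
  have C: "C1fun (h k)" for k unfolding h_def by (rule C1fun_Hb)
  have B: "0 \<le> h k x" "h k x \<le> 1" for k x unfolding h_def using Hb_vals(3,4)[OF o1 o2] by auto
  show ?thesis by (rule that[of h, OF C S B L])
qed




lemma Xd_local:
  assumes G: "stratified br deg" and U: "open U" "x \<in> U" and c: "\<And>y. y \<in> U \<Longrightarrow> g y = c"
  shows "Xd br deg j g x = 0"
proof -
  let ?\<gamma> = "\<lambda>t::real. gmul br deg x (t *\<^sub>R axis j 1)"
  have "isCont ?\<gamma> 0" using gmul_cont[OF G] by (simp add: continuous_on_eq_continuous_at)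
  moreover have "?\<gamma> 0 = x" using gmul_zero[OF G] by simp
  ultimately have "eventually (\<lambda>t. ?\<gamma> t \<in> U) (at 0)"
    using U unfolding isCont_def by (metis topological_tendstoD)
  then have ev: "eventually (\<lambda>t. t \<noteq> 0 \<longrightarrow> ?\<gamma> t \<in> U) (nhds 0)"
    by (simp add: eventually_at_filter)
  have ev2: "eventually (\<lambda>t. g (?\<gamma> t) = c) (nhds (0::real))"
    using ev by eventually_elim (use c \<open>?\<gamma> 0 = x\<close> U in auto)
  have "((\<lambda>t. g (?\<gamma> t)) has_field_derivative 0) (at (0::real)) \<longleftrightarrow> ((\<lambda>_. c) has_field_derivative 0) (at (0::real))"
    by (rule DERIV_cong_ev[OF refl ev2 refl])
  then have "((\<lambda>t. g (?\<gamma> t)) has_field_derivative 0) (at (0::real))" by simp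
  then show ?thesis unfolding Xd_def by (rule DERIV_imp_deriv)
qed


lemma meas_AE_complete:
  fixes f g :: "'a \<Rightarrow> real"
  assumes cm: "complete_measure M" and f: "f \<in> borel_measurable M" and ae: "AE x in M. f x = g x"
  shows "g \<in> borel_measurable M"
proof (rule measurableI)
  fix x assume "x \<in> space M" then show "g x \<in> space borel" by simp
next
  fix A :: "real set" assume A: "A \<in> sets borel"
  have "AE x in M. x \<in> f -` A \<inter> space M \<longleftrightarrow> x \<in> g -` A \<inter> space M"
    using ae by eventually_elim auto
  moreover have "f -` A \<inter> space M \<in> sets M" using f A by (rule measurable_sets)
  ultimately show "g -` A \<inter> space M \<in> sets M"
    using complete_measure.in_sets_AE[OF cm] by blast
qed

lemma integral_AE_complete:
  fixes f g :: "'a \<Rightarrow> real"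
  assumes cm: "complete_measure M" and ae: "AE x in M. f x = g x"
  shows "integral\<^sup>L M f = integral\<^sup>L M g"
proof (cases "f \<in> borel_measurable M")
  case True
  then have "g \<in> borel_measurable M" using meas_AE_complete[OF cm True ae] by blast
  then show ?thesis using integral_cong_AE[OF True _ ae] by blast
next
  case False
  have ae2: "AE x in M. g x = f x" using ae by eventually_elim simp
  have "g \<notin> borel_measurable M" using meas_AE_complete[OF cm _ ae2] False by blast
  then have "\<not> integrable M g" "\<not> integrable M f" using False borel_measurable_integrable by blast+
  then show ?thesis by (simp add: not_integrable_integral_eq)
qed

lemma set_int_one:
  fixes g :: "'a \<Rightarrow> real"
  assumes cm: "complete_measure M" and A: "A \<subseteq> space M" and ae: "AE x in M. x \<in> A \<longrightarrow> g x = 1"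
  shows "(\<integral>x\<in>A. g x \<partial>M) = measure M A"
proof -
  have "AE x in M. indicator A x *\<^sub>R g x = indicator A x"
    using ae by eventually_elim (auto simp: indicator_def)
  then have "(\<integral>x\<in>A. g x \<partial>M) = integral\<^sup>L M (indicator A)"
    unfolding set_lebesgue_integral_def by (rule integral_AE_complete[OF cm])
  also have "\<dots> = measure M A" using A by (simp add: Int_absorb2)
  finally show ?thesis .
qed

lemma meas_up:
  fixes f :: "'a::euclidean_space \<Rightarrow> real"
  assumes f: "f \<in> borel_measurable borel" and sp: "space M = \<Omega>"
    and ss: "sets (restrict_space lborel \<Omega>) \<subseteq> sets M"
  shows "f \<in> borel_measurable M"
proof (rule measurableI)
  fix x assume "x \<in> space M" then show "f x \<in> space borel" by simp
next
  fix A :: "real set" assume A: "A \<in> sets borel"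
  have "f -` A \<inter> space borel \<in> sets borel" using f A by (rule measurable_sets)
  then have "f -` A \<in> sets lborel" by simp
  then have "\<Omega> \<inter> f -` A \<in> sets (restrict_space lborel \<Omega>)" unfolding sets_restrict_space by blast
  then show "f -` A \<inter> space M \<in> sets M" using ss sp by (auto simp: Int_commute)
qed

lemma hvar_zero:
  assumes G: "stratified br deg" and UE: "U \<inter> E = {}"
  shows "hvar br deg (indicator E) U = 0"
proof -
  have "(\<integral>x. indicator E x * hdiv br deg \<phi> x \<partial>lebesgue) = 0" if \<phi>: "C1c_hfield deg U \<phi>" for \<phi>
  proof -
    have "indicator E x * hdiv br deg \<phi> x = 0" for x
    proof (cases "x \<in> E")
      case True
      have "Xd br deg j (\<lambda>y. \<phi> y $ j) x = 0" for j
      proof -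
        have cl: "closure {y. \<phi> y $ j \<noteq> 0} \<subseteq> U" using \<phi> unfolding C1c_hfield_def C1c_def by blast
        have xn: "x \<notin> closure {y. \<phi> y $ j \<noteq> 0}" using cl True UE by blast
        show ?thesis
          by (rule Xd_local[OF G _ _ , of "- closure {y. \<phi> y $ j \<noteq> 0}" x _ 0])
             (use xn closure_subset[of "{y. \<phi> y $ j \<noteq> 0}"] in auto)
      qed
      then show ?thesis by (simp add: hdiv_def)
    qed simp
    then have "(\<lambda>x. indicator E x * hdiv br deg \<phi> x) = (\<lambda>x. 0::real)" by (rule ext)
    then show ?thesis by simp
  qed
  then have "hvar br deg (indicator E) U = (SUP \<phi>\<in>{\<phi>. C1c_hfield deg U \<phi> \<and> (\<forall>x. norm (\<phi> x) \<le> 1)}. (bot::ennreal))"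
    unfolding hvar_def by (intro SUP_cong) (auto simp: bot_ennreal)
  also have "\<dots> = 0" unfolding SUP_bot by (simp add: bot_ennreal)
  finally show ?thesis .
qed

lemma hvar_measure_le:
  assumes X: "X \<in> sets (restrict_space lborel \<Omega>)" and U: "open U" "X \<subseteq> U" "U \<subseteq> \<Omega>"
  shows "emeasure (hvar_measure br deg \<Omega> f) X \<le> hvar br deg f U"
proof -
  have "(INF U\<in>{U. open U \<and> X \<subseteq> U \<and> U \<subseteq> \<Omega>}. hvar br deg f U) \<le> hvar br deg f U"
    using U by (intro INF_lower) auto
  then show ?thesis unfolding hvar_measure_def emeasure_measure_of_conv by auto
qed



lemma id_meas:
  fixes M :: "('a::euclidean_space) measure"
  assumes sp: "space M = \<Omega>" and ss: "sets (restrict_space lborel \<Omega>) \<subseteq> sets M"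
  shows "(\<lambda>x. x) \<in> measurable M borel"
proof (rule measurableI)
  fix x assume "x \<in> space M" then show "x \<in> space borel" by simp
next
  fix A :: "'a set" assume A: "A \<in> sets borel"
  then have "A \<in> sets lborel" by simp
  then have "\<Omega> \<inter> A \<in> sets (restrict_space lborel \<Omega>)" unfolding sets_restrict_space by blast
  then show "(\<lambda>x. x) -` A \<inter> space M \<in> sets M" using ss sp by (auto simp: Int_commute)
qed

lemma box_lim:
  fixes M :: "(real^'n::finite) measure"
  assumes fM: "finite_measure M" and sp: "space M = \<Omega>" and ss: "sets (restrict_space lborel \<Omega>) \<subseteq> sets M"
    and E1: "E1 \<in> sets M" and bx: "box a b \<subseteq> \<Omega>"
    and hm: "\<And>k. continuous_on UNIV (h k)" and hb: "\<And>k x. 0 \<le> h k x" "\<And>k x. h k x \<le> 1"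
    and hl: "\<And>x. (\<lambda>k. h k x) \<longlonglongrightarrow> indicator (box a b) x"
  shows "(\<lambda>k. (\<integral>x\<in>E1. h k x \<partial>M)) \<longlonglongrightarrow> measure M (E1 \<inter> box a b)"
proof -
  have bxs: "box a b \<in> sets M"
  proof -
    have "box a b \<in> sets lborel" by simp
    then have "\<Omega> \<inter> box a b \<in> sets (restrict_space lborel \<Omega>)" unfolding sets_restrict_space by blast
    then show ?thesis using ss bx by (auto simp: Int_absorb1)
  qed
  have hmeas: "h k \<in> borel_measurable M" for k
    by (rule meas_up[OF borel_measurable_continuous_onI[OF hm] sp ss])
  have "(\<lambda>k. integral\<^sup>L M (\<lambda>x. indicator E1 x *\<^sub>R h k x)) \<longlonglongrightarrow> integral\<^sup>L M (\<lambda>x. indicator E1 x *\<^sub>R (indicator (box a b) x::real))"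
  proof (rule integral_dominated_convergence[where w = "\<lambda>_. 1"])
    show "(\<lambda>x. indicator E1 x *\<^sub>R (indicator (box a b) x::real)) \<in> borel_measurable M"
      by (rule borel_measurable_scaleR[OF borel_measurable_indicator[OF E1] borel_measurable_indicator[OF bxs]])
    show "(\<lambda>x. indicator E1 x *\<^sub>R h k x) \<in> borel_measurable M" for k
      by (rule borel_measurable_scaleR[OF borel_measurable_indicator[OF E1] hmeas])
    show "integrable M (\<lambda>_. 1::real)" using fM by (rule finite_measure.integrable_const)
    show "AE x in M. (\<lambda>k. indicator E1 x *\<^sub>R h k x) \<longlonglongrightarrow> indicator E1 x *\<^sub>R (indicator (box a b) x::real)"
      by (intro always_eventually allI tendsto_scaleR tendsto_const hl)
    show "AE x in M. norm (indicator E1 x *\<^sub>R h k x) \<le> 1" for k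
      using hb by (intro always_eventually allI) (auto simp: indicator_def)
  qed
  moreover have "integral\<^sup>L M (\<lambda>x. indicator E1 x *\<^sub>R (indicator (box a b) x::real)) = measure M (E1 \<inter> box a b)"
  proof -
    have "(\<lambda>x. indicator E1 x *\<^sub>R (indicator (box a b) x::real)) = (indicator (E1 \<inter> box a b) :: _ \<Rightarrow> real)"
      by (auto simp: fun_eq_iff indicator_def)
    moreover have "E1 \<inter> box a b \<subseteq> space M" using E1 sets.sets_into_space by blast
    ultimately show ?thesis by (simp add: Int_absorb2)
  qed
  ultimately show ?thesis unfolding set_lebesgue_integral_def by simp
qed



lemma sigma_boxes:
  fixes W :: "(real^'n::finite) set"
  assumes W: "open W"
  defines "G \<equiv> {X. \<exists>a b. X = box a b \<and> X \<subseteq> W} \<union> {A. A \<in> sets borel \<and> A \<inter> W = {}}"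
  shows "sets borel = sigma_sets UNIV G" and "Int_stable G"
proof -
  let ?S = "sigma_sets UNIV G"
  interpret S: sigma_algebra UNIV ?S by (rule sigma_algebra_sigma_sets) simp
  have GS: "G \<subseteq> ?S" by (rule sigma_sets_superset_generator)
  have Gb: "G \<subseteq> sets borel" unfolding G_def by auto
  have openW: "Oo \<inter> W \<in> ?S" if "open Oo" for Oo
  proof -
    have "open (Oo \<inter> W)" using that W by blast
    from open_countable_Union_open_box[OF this] obtain D where
      D: "countable D" "D \<subseteq> Pow (Oo \<inter> W)" "\<And>X. X \<in> D \<Longrightarrow> \<exists>a b. X = box a b" "\<Union>D = Oo \<inter> W" by blast
    have "D \<subseteq> G" unfolding G_def using D(2,3) by blast
    then have "\<Union>D \<in> ?S" using D(1) GS by (intro S.countable_Union) auto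
    then show ?thesis using D(4) by simp
  qed
  have Wcap: "B \<inter> W \<in> ?S" if "B \<in> sigma_sets UNIV {S. open S}" for B
    using that
  proof (induction rule: sigma_sets.induct)
    case (Basic a) then show ?case using openW by simp
  next
    case Empty then show ?case by simp
  next
    case (Compl a)
    have "(UNIV - a) \<inter> W = W - (a \<inter> W)" by blast
    moreover have "W \<in> ?S" using openW[of UNIV] by simp
    ultimately show ?case using S.Diff[OF _ Compl.IH] by simp
  next
    case (Union A)
    have "(\<Union>i. A i) \<inter> W = (\<Union>i. A i \<inter> W)" by blast
    moreover have "(\<Union>i. A i \<inter> W) \<in> ?S" using Union.IH by (intro S.countable_UN) auto
    ultimately show ?case by simp
  qed
  show "sets borel = ?S"
  proof
    show "?S \<subseteq> sets borel" using sets.sigma_sets_subset[OF Gb] by simp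
    show "sets borel \<subseteq> ?S"
    proof
      fix B :: "(real^'n) set" assume B: "B \<in> sets borel"
      then have "B \<inter> W \<in> ?S" using Wcap by (simp add: sets_borel)
      moreover have "B - W \<in> G" unfolding G_def using B W by auto
      then have "B - W \<in> ?S" using GS by blast
      ultimately have "(B \<inter> W) \<union> (B - W) \<in> ?S" by (rule S.Un)
      moreover have "(B \<inter> W) \<union> (B - W) = B" by blast
      ultimately show "B \<in> ?S" by simp
    qed
  qed
  show "Int_stable G"
    unfolding Int_stable_def
  proof (intro ballI)
    fix X Y assume X: "X \<in> G" and Y: "Y \<in> G"
    show "X \<inter> Y \<in> G"
    proof (cases "X \<inter> W = {} \<or> Y \<inter> W = {}")
      case True
      have "X \<in> sets borel" "Y \<in> sets borel" using X Y Gb by auto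
      then show ?thesis using True unfolding G_def by auto
    next
      case False
      then obtain a b c d where "X = box a b" "Y = box c d" "X \<subseteq> W" "Y \<subseteq> W"
        using X Y unfolding G_def by blast
      then have "X \<inter> Y = box (\<Sum>i\<in>Basis. max (a \<bullet> i) (c \<bullet> i) *\<^sub>R i) (\<Sum>i\<in>Basis. min (b \<bullet> i) (d \<bullet> i) *\<^sub>R i)"
        "X \<inter> Y \<subseteq> W" by (simp add: box_Int_box, blast)
      then show ?thesis unfolding G_def by blast
    qed
  qed
qed




lemma box_test_zero:
  fixes Mp Mn :: "(real^'n::finite) measure"
  assumes fMp: "finite_measure Mp" and fMn: "finite_measure Mn"
    and spp: "space Mp = \<Omega>" and spn: "space Mn = \<Omega>"
    and ssp: "sets (restrict_space lborel \<Omega>) \<subseteq> sets Mp" and ssn: "sets (restrict_space lborel \<Omega>) \<subseteq> sets Mn"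
    and E1p: "E1 \<in> sets Mp" and E1n: "E1 \<in> sets Mn"
    and W: "open W" "W \<subseteq> \<Omega>"
    and P: "P \<in> sets (restrict_space lborel \<Omega>)" "emeasure Mp (\<Omega> - P) = 0" "emeasure Mn P = 0"
    and test: "\<And>h. C1fun h \<Longrightarrow> (\<exists>C. compact C \<and> C \<subseteq> W \<and> {x. h x \<noteq> 0} \<subseteq> C) \<Longrightarrow>
                  (\<integral>x\<in>E1. h x \<partial>Mp) = (\<integral>x\<in>E1. h x \<partial>Mn)"
  shows "emeasure Mp (E1 \<inter> W) = 0 \<and> emeasure Mn (E1 \<inter> W) = 0"
proof -
  have SB: "X \<inter> \<Omega> \<in> sets (restrict_space lborel \<Omega>)" if "X \<in> sets borel" for X
  proof -
    have "X \<in> sets lborel" using that by simp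
    then show ?thesis unfolding sets_restrict_space by blast
  qed
  have Wr: "W \<in> sets (restrict_space lborel \<Omega>)" using SB[of W] W by (auto simp: Int_absorb2)
  have boxeq: "emeasure Mp (E1 \<inter> box a b) = emeasure Mn (E1 \<inter> box a b)" if bW: "box a b \<subseteq> W" for a b
  proof (cases "\<forall>i. a$i < b$i")
    case False
    then obtain i where i: "\<not> a$i < b$i" by blast
    have "x \<notin> box a b" for x
    proof
      assume "x \<in> box a b"
      then have "a$i < x$i" "x$i < b$i" unfolding mem_box_cart by blast+
      then show False using i by linarith
    qed
    then have "box a b = {}" by blast
    then show ?thesis by simp
  next
    case True
    obtain h where h: "\<And>k. C1fun (h k)" "\<And>k. \<exists>C. compact C \<and> C \<subseteq> box a b \<and> {x. h k x \<noteq> 0} \<subseteq> C"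
      "\<And>k x. 0 \<le> h k x" "\<And>k x. h k x \<le> 1" "\<And>x. (\<lambda>k. h k x) \<longlonglongrightarrow> indicator (box a b) x"
      by (rule box_approx[OF True]) blast
    have eqk: "(\<integral>x\<in>E1. h k x \<partial>Mp) = (\<integral>x\<in>E1. h k x \<partial>Mn)" for k
    proof (rule test[OF h(1)])
      obtain C where "compact C" "C \<subseteq> box a b" "{x. h k x \<noteq> 0} \<subseteq> C" using h(2) by blast
      then show "\<exists>C. compact C \<and> C \<subseteq> W \<and> {x. h k x \<noteq> 0} \<subseteq> C" using bW by blast
    qed
    have hc: "continuous_on UNIV (h k)" for k by (rule C1fun_cont[OF h(1)])
    have bO: "box a b \<subseteq> \<Omega>" using bW W by blast
    have lp: "(\<lambda>k. (\<integral>x\<in>E1. h k x \<partial>Mp)) \<longlonglongrightarrow> measure Mp (E1 \<inter> box a b)"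
      by (rule box_lim[OF fMp spp ssp E1p bO hc h(3) h(4) h(5)])
    have ln: "(\<lambda>k. (\<integral>x\<in>E1. h k x \<partial>Mn)) \<longlonglongrightarrow> measure Mn (E1 \<inter> box a b)"
      by (rule box_lim[OF fMn spn ssn E1n bO hc h(3) h(4) h(5)])
    have "measure Mp (E1 \<inter> box a b) = measure Mn (E1 \<inter> box a b)"
      using LIMSEQ_unique[OF lp ln[folded eqk]] .
    moreover have "box a b \<inter> \<Omega> \<in> sets (restrict_space lborel \<Omega>)" by (rule SB) simp
    then have "box a b \<in> sets Mp" "box a b \<in> sets Mn" using ssp ssn bO by (auto simp: Int_absorb2)
    then have "E1 \<inter> box a b \<in> sets Mp" "E1 \<inter> box a b \<in> sets Mn" using E1p E1n by auto
    ultimately show ?thesis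
      using finite_measure.emeasure_eq_measure[OF fMp] finite_measure.emeasure_eq_measure[OF fMn] by metis
  qed
  have mainp: "\<exists>\<rho>. sets \<rho> = sets borel \<and> (\<forall>X\<in>sets borel. emeasure \<rho> X = emeasure M (E1 \<inter> W \<inter> X))"
    if fM: "finite_measure M" and sp: "space M = \<Omega>" and ss: "sets (restrict_space lborel \<Omega>) \<subseteq> sets M"
      and E1M: "E1 \<in> sets M" for M
  proof -
    define \<rho> where "\<rho> = distr (density M (indicator (E1 \<inter> W))) borel (\<lambda>x. x)"
    have E1W: "E1 \<inter> W \<in> sets M" using E1M Wr ss by blast
    have idm: "(\<lambda>x. x) \<in> measurable (density M (indicator (E1 \<inter> W))) borel"
      by (rule id_meas) (use sp ss in auto)
    have "emeasure \<rho> X = emeasure M (E1 \<inter> W \<inter> X)" if X: "X \<in> sets borel" for X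
    proof -
      have XO: "X \<inter> \<Omega> \<in> sets M" using SB[OF X] ss by blast
      have "emeasure \<rho> X = emeasure (density M (indicator (E1 \<inter> W))) (X \<inter> \<Omega>)"
        unfolding \<rho>_def using emeasure_distr[OF idm X] sp by (simp add: vimage_def Int_def)
      also have "\<dots> = (\<integral>\<^sup>+ x. indicator (E1 \<inter> W) x * indicator (X \<inter> \<Omega>) x \<partial>M)"
        by (rule emeasure_density[OF borel_measurable_indicator[OF E1W] XO])
      also have "\<dots> = (\<integral>\<^sup>+ x. indicator (E1 \<inter> W \<inter> X) x \<partial>M)"
        using W(2) by (intro nn_integral_cong) (auto simp: indicator_def)
      also have "\<dots> = emeasure M (E1 \<inter> W \<inter> X)"
      proof -
        have "E1 \<inter> W \<inter> X = (E1 \<inter> W) \<inter> (X \<inter> \<Omega>)" using W(2) by blast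
        then have "E1 \<inter> W \<inter> X \<in> sets M" using E1W XO by auto
        then show ?thesis by simp
      qed
      finally show ?thesis .
    qed
    moreover have "sets \<rho> = sets borel" unfolding \<rho>_def by simp
    ultimately show ?thesis by blast
  qed
  obtain \<rho> where \<rho>: "sets \<rho> = sets borel" "\<And>X. X \<in> sets borel \<Longrightarrow> emeasure \<rho> X = emeasure Mp (E1 \<inter> W \<inter> X)"
    using mainp[OF fMp spp ssp E1p] by blast
  obtain \<sigma> where \<sigma>: "sets \<sigma> = sets borel" "\<And>X. X \<in> sets borel \<Longrightarrow> emeasure \<sigma> X = emeasure Mn (E1 \<inter> W \<inter> X)"
    using mainp[OF fMn spn ssn E1n] by blast
  define G where "G = {X. \<exists>a b. X = box a b \<and> X \<subseteq> W} \<union> {A. A \<in> sets borel \<and> A \<inter> W = {}}"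
  have sG: "sets borel = sigma_sets UNIV G" and iG: "Int_stable G"
    unfolding G_def by (rule sigma_boxes[OF W(1)])+
  have Gb: "G \<subseteq> sets borel" unfolding G_def by auto
  have "\<rho> = \<sigma>"
  proof -
    obtain D where D: "countable D" "D \<subseteq> Pow W" "\<And>X. X \<in> D \<Longrightarrow> \<exists>a b. X = box a b" "\<Union>D = W"
      using open_countable_Union_open_box[OF W(1)] by blast
    show ?thesis
    proof (rule measure_eqI_generator_eq_countable[OF iG _ _ _ _ _ _ _ ])
      show "G \<subseteq> Pow UNIV" by simp
      show "sets \<rho> = sigma_sets UNIV G" "sets \<sigma> = sigma_sets UNIV G" using \<rho>(1) \<sigma>(1) sG by auto
      fix X assume X: "X \<in> G"
      then have Xb: "X \<in> sets borel" using Gb by blast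
      show "emeasure \<rho> X = emeasure \<sigma> X"
      proof (cases "X \<inter> W = {}")
        case True
        then have "E1 \<inter> W \<inter> X = {}" by blast
        then show ?thesis using \<rho>(2)[OF Xb] \<sigma>(2)[OF Xb] by simp
      next
        case False
        then obtain a b where ab: "X = box a b" "box a b \<subseteq> W" using X unfolding G_def by blast
        then have "E1 \<inter> W \<inter> X = E1 \<inter> box a b" by blast
        then show ?thesis using \<rho>(2)[OF Xb] \<sigma>(2)[OF Xb] boxeq[OF ab(2)] by simp
      qed
    next
      show "{UNIV - W} \<union> D \<subseteq> G" unfolding G_def using D(2,3) W(1) by auto
      show "\<Union>({UNIV - W} \<union> D) = UNIV" using D(4) by auto
      show "countable ({UNIV - W} \<union> D)" using D(1) by simp
      fix X assume XD: "X \<in> {UNIV - W} \<union> D"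
      have "X \<in> sets borel"
      proof (cases "X = UNIV - W")
        case True then show ?thesis using W(1) by auto
      next
        case False
        then have "X \<in> D" using XD by blast
        then obtain a b where "X = box a b" using D(3) by blast
        then show ?thesis by simp
      qed
      then have "emeasure \<rho> X = emeasure Mp (E1 \<inter> W \<inter> X)" by (rule \<rho>(2))
      also have "\<dots> \<le> emeasure Mp \<Omega>"
        using sets.sets_into_space[OF E1p] spp sets.top[of Mp] by (intro emeasure_mono) auto
      also have "\<dots> < \<infinity>" using finite_measure.emeasure_finite[OF fMp] by (simp add: top.not_eq_extremum)
      finally show "emeasure \<rho> X \<noteq> \<infinity>" by simp
    qed
  qed
  obtain P0 where P0: "P0 \<in> sets borel" "P = \<Omega> \<inter> P0"
    using P(1) unfolding sets_restrict_space by auto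
  have P0c: "UNIV - P0 \<in> sets borel" using P0(1) by auto
  have "emeasure \<rho> (UNIV - P0) \<le> emeasure Mp (\<Omega> - P)"
    unfolding \<rho>(2)[OF P0c]
  proof (rule emeasure_mono)
    show "E1 \<inter> W \<inter> (UNIV - P0) \<subseteq> \<Omega> - P" using W(2) P0(2) by blast
    show "\<Omega> - P \<in> sets Mp" using P(1) ssp spp by (metis sets.compl_sets subsetD)
  qed
  then have r1: "emeasure \<rho> (UNIV - P0) = 0" using P(2) by simp
  have "emeasure \<sigma> P0 \<le> emeasure Mn P"
    unfolding \<sigma>(2)[OF P0(1)]
  proof (rule emeasure_mono)
    show "E1 \<inter> W \<inter> P0 \<subseteq> P" using W(2) P0(2) by blast
    show "P \<in> sets Mn" using P(1) ssn by blast
  qed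
  then have r2: "emeasure \<rho> P0 = 0" using P(3) \<open>\<rho> = \<sigma>\<close> by simp
  have "emeasure \<rho> UNIV = emeasure \<rho> P0 + emeasure \<rho> (UNIV - P0)"
    using P0(1) P0c \<rho>(1) by (subst plus_emeasure) (auto simp: sets_eq_imp_space_eq)
  then have r0: "emeasure \<rho> UNIV = 0" using r1 r2 by simp
  have "emeasure Mp (E1 \<inter> W) = 0" using r0 \<rho>(2)[of UNIV] by simp
  moreover have "emeasure Mn (E1 \<inter> W) = 0" using r0 \<sigma>(2)[of UNIV] \<open>\<rho> = \<sigma>\<close> by simp
  ultimately show ?thesis by blast
qed




theorem mainTheorem17:
  fixes br :: "real^'n::finite \<Rightarrow> real^'n \<Rightarrow> real^'n" and deg :: "'n \<Rightarrow> nat"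
    and d :: "real^'n \<Rightarrow> real^'n \<Rightarrow> real"
    and \<Omega> E E1 :: "(real^'n) set"
    and F \<nu> :: "real^'n \<Rightarrow> real^'n"
    and mup mun :: "(real^'n) measure"
    and Tri Tre :: "real^'n \<Rightarrow> real"
  assumes G: "stratified br deg"
    and dist: "hom_dist br deg d"
    and \<Omega>: "open \<Omega>"
    and F: "DM_inf br deg \<Omega> F mup mun"
    and Emeas: "E \<in> sets lebesgue"
    and Ecpt: "compact (closure E)" "closure E \<subseteq> \<Omega>"
    and Eper: "hvar br deg (indicator E) \<Omega> < \<infinity>"
    and nu_meas: "\<nu> \<in> borel_measurable (completion (hvar_measure br deg \<Omega> (indicator E)))"
    and nu_unit: "AE x in hvar_measure br deg \<Omega> (indicator E). horizontal deg (\<nu> x) \<and> norm (\<nu> x) = 1"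
    and nu_GG: "\<And>\<phi>. C1c_hfield deg \<Omega> \<phi> \<Longrightarrow>
         (\<integral>x. indicator E x * hdiv br deg \<phi> x \<partial>lebesgue)
           = (\<integral>x. \<phi> x \<bullet> \<nu> x \<partial>completion (hvar_measure br deg \<Omega> (indicator E)))"
    and E1_sub: "E1 \<subseteq> \<Omega> - red_bdry \<Omega> d (completion (hvar_measure br deg \<Omega> (indicator E))) \<nu>"
    and E1_meas: "E1 \<in> sets (completion mup)" "E1 \<in> sets (completion mun)"
    and Tri_meas: "Tri \<in> borel_measurable (completion (hvar_measure br deg \<Omega> (indicator E)))"
    and Tre_meas: "Tre \<in> borel_measurable (completion (hvar_measure br deg \<Omega> (indicator E)))"
    and Tri_bdd: "\<exists>C. AE x in hvar_measure br deg \<Omega> (indicator E).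
                    x \<in> red_bdry \<Omega> d (completion (hvar_measure br deg \<Omega> (indicator E))) \<nu> \<longrightarrow> \<bar>Tri x\<bar> \<le> C"
    and Tre_bdd: "\<exists>C. AE x in hvar_measure br deg \<Omega> (indicator E).
                    x \<in> red_bdry \<Omega> d (completion (hvar_measure br deg \<Omega> (indicator E))) \<nu> \<longrightarrow> \<bar>Tre x\<bar> \<le> C"
    and int_trace: "\<And>g. C1c \<Omega> g \<Longrightarrow>
         - (\<integral>x. indicator E x * hpair br deg F g x \<partial>lebesgue)
           = (\<integral>x\<in>E1. g x \<partial>completion mup) - (\<integral>x\<in>E1. g x \<partial>completion mun)
             - (\<integral>x\<in>red_bdry \<Omega> d (completion (hvar_measure br deg \<Omega> (indicator E))) \<nu>.
                   g x * Tri x \<partial>completion (hvar_measure br deg \<Omega> (indicator E)))"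
    and ext_trace: "\<And>g. C1c \<Omega> g \<Longrightarrow>
         - (\<integral>x. indicator E x * hpair br deg F g x \<partial>lebesgue)
           = (\<integral>x\<in>E1 \<union> red_bdry \<Omega> d (completion (hvar_measure br deg \<Omega> (indicator E))) \<nu>. g x \<partial>completion mup)
             - (\<integral>x\<in>E1 \<union> red_bdry \<Omega> d (completion (hvar_measure br deg \<Omega> (indicator E))) \<nu>. g x \<partial>completion mun)
             - (\<integral>x\<in>red_bdry \<Omega> d (completion (hvar_measure br deg \<Omega> (indicator E))) \<nu>.
                   g x * Tre x \<partial>completion (hvar_measure br deg \<Omega> (indicator E)))"
  shows "(measure (completion mup) E1 - measure (completion mun) E1
           = (\<integral>x\<in>red_bdry \<Omega> d (completion (hvar_measure br deg \<Omega> (indicator E))) \<nu>.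
                Tri x \<partial>completion (hvar_measure br deg \<Omega> (indicator E))) \<and>
         measure (completion mup) (E1 \<union> red_bdry \<Omega> d (completion (hvar_measure br deg \<Omega> (indicator E))) \<nu>)
           - measure (completion mun) (E1 \<union> red_bdry \<Omega> d (completion (hvar_measure br deg \<Omega> (indicator E))) \<nu>)
           = (\<integral>x\<in>red_bdry \<Omega> d (completion (hvar_measure br deg \<Omega> (indicator E))) \<nu>.
                Tre x \<partial>completion (hvar_measure br deg \<Omega> (indicator E))))"
proof -
  let ?L = "completion (hvar_measure br deg \<Omega> (indicator E))"
  let ?R = "red_bdry \<Omega> d ?L \<nu>"
  define K where "K = closure E"
  define W where "W = \<Omega> - K"
  have Kc: "compact K" and KO: "K \<subseteq> \<Omega>" using Ecpt unfolding K_def by auto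
  have EK: "E \<subseteq> K" unfolding K_def by (rule closure_subset)
  have Wo: "open W" unfolding W_def K_def using \<Omega> by (intro open_Diff) auto
  have WO: "W \<subseteq> \<Omega>" unfolding W_def by blast
  have WK: "W \<inter> K = {}" unfolding W_def by blast
  have Fm: "space mup = \<Omega>" "sets mup = sets (restrict_space lborel \<Omega>)" "finite_measure mup"
    "space mun = \<Omega>" "sets mun = sets (restrict_space lborel \<Omega>)" "finite_measure mun"
    "\<exists>P\<in>sets mup. emeasure mup (\<Omega> - P) = 0 \<and> emeasure mun P = 0"
    using F unfolding DM_inf_def by blast+
  obtain P where P: "P \<in> sets mup" "emeasure mup (\<Omega> - P) = 0" "emeasure mun P = 0" using Fm(7) by blast
  have fin_c: "finite_measure (completion M)" if "finite_measure M" for M :: "(real^'n) measure"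
  proof (rule finite_measureI)
    have "emeasure (completion M) (space (completion M)) = emeasure M (space M)" by simp
    then show "emeasure (completion M) (space (completion M)) \<noteq> \<infinity>"
      using finite_measure.emeasure_finite[OF that] by simp
  qed
  have cm: "complete_measure (completion M)" for M :: "(real^'n) measure"
    by (rule completion.complete_measure_axioms)
  have spc: "space (completion mup) = \<Omega>" "space (completion mun) = \<Omega>" using Fm by auto
  have ssc: "sets (restrict_space lborel \<Omega>) \<subseteq> sets (completion mup)"
    "sets (restrict_space lborel \<Omega>) \<subseteq> sets (completion mun)"
    using Fm(2,5) sets_completionI_sets by blast+
  have Pr: "P \<in> sets (restrict_space lborel \<Omega>)" using P(1) Fm(2) by simp
  have Pc: "emeasure (completion mup) (\<Omega> - P) = 0" "emeasure (completion mun) P = 0"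
  proof -
    have "\<Omega> - P \<in> sets mup" using P(1) Fm(1) by (metis sets.compl_sets)
    then show "emeasure (completion mup) (\<Omega> - P) = 0" using P(2) by simp
    show "emeasure (completion mun) P = 0" using P(1,3) Fm(2,5) by simp
  qed
  have SB: "X \<inter> \<Omega> \<in> sets (restrict_space lborel \<Omega>)" if "open X" for X
  proof -
    have "X \<in> sets lborel" using that by simp
    then show ?thesis unfolding sets_restrict_space by blast
  qed
  have RK: "?R \<subseteq> K"
  proof
    fix x assume xR: "x \<in> ?R"
    then have xO: "x \<in> \<Omega>" and pos: "\<forall>r>0. measure ?L ({y. d y x < r} \<inter> \<Omega>) > 0"
      unfolding red_bdry_def by blast+
    show "x \<in> K"
    proof (rule ccontr)
      assume xK: "x \<notin> K"
      have dprops: "\<forall>x y. d x y = 0 \<longleftrightarrow> x = y" "\<forall>x y. d x y = d y x" "\<forall>x y z. d x z \<le> d x y + d y z"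
        "continuous_on UNIV (\<lambda>p. d (fst p) (snd p))"
        using dist unfolding hom_dist_def by blast+
      have dc: "continuous_on UNIV (\<lambda>y. d y x)"
      proof -
        have "continuous_on UNIV (\<lambda>y. (y, x))" by (intro continuous_intros)
        from continuous_on_compose2[OF dprops(4) this] show ?thesis by simp
      qed
      have dpos: "d y x > 0" if "y \<noteq> x" for y
      proof -
        have t: "d y y \<le> d y x + d x y" using dprops(3) by blast
        have "d y y = 0" using dprops(1) by blast
        moreover have "d x y = d y x" using dprops(2) by blast
        ultimately have "0 \<le> d y x" using t by linarith
        moreover have "d y x \<noteq> 0" using dprops(1) that by blast
        ultimately show ?thesis by simp
      qed
      obtain r where r: "r > 0" "\<And>y. y \<in> K \<Longrightarrow> r \<le> d y x"
      proof (cases "K = {}")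
        case True then show ?thesis using that[of 1] by simp
      next
        case False
        obtain y0 where y0: "y0 \<in> K" "\<forall>z\<in>K. d y0 x \<le> d z x"
          using continuous_attains_inf[OF Kc False continuous_on_subset[OF dc]] by blast
        have "y0 \<noteq> x" using y0(1) xK by blast
        then show ?thesis using that[of "d y0 x"] dpos y0 by blast
      qed
      define U where "U = {y. d y x < r} \<inter> \<Omega>"
      have Uo: "open U" unfolding U_def using open_Collect_less[OF dc continuous_on_const] \<Omega> by blast
      have UE: "U \<inter> E = {}"
      proof (rule ccontr)
        assume "U \<inter> E \<noteq> {}"
        then obtain y where "y \<in> U" "y \<in> E" by blast
        then have "d y x < r" "y \<in> K" using EK unfolding U_def by auto
        then have "d y x < r" "r \<le> d y x" using r(2) by auto
        then show False by simp
      qed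
      have hz: "hvar br deg (indicator E) U = 0" by (rule hvar_zero[OF G UE])
      have Ur: "U \<in> sets (restrict_space lborel \<Omega>)"
        using SB[OF Uo] unfolding U_def by (simp add: Int_absorb2)
      have "emeasure (hvar_measure br deg \<Omega> (indicator E)) U \<le> hvar br deg (indicator E) U"
        by (rule hvar_measure_le[OF Ur Uo]) (auto simp: U_def)
      then have e0: "emeasure (hvar_measure br deg \<Omega> (indicator E)) U = 0" using hz by simp
      have "sets (restrict_space lborel \<Omega>) \<subseteq> Pow \<Omega>"
        using sets.space_closed[of "restrict_space lborel \<Omega>"] by (simp add: space_restrict_space)
      then have "U \<in> sets (hvar_measure br deg \<Omega> (indicator E))"
        unfolding hvar_measure_def sets_measure_of_conv using Ur by auto
      then have "measure ?L U = 0" using e0 by (simp add: measure_def)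
      moreover have "measure ?L U > 0" using pos r(1) unfolding U_def by blast
      ultimately show False by simp
    qed
  qed
  have RO: "?R \<subseteq> \<Omega>" unfolding red_bdry_def by blast
  have lhs0: "(\<integral>x. indicator E x * hpair br deg F g x \<partial>lebesgue) = 0"
    if V: "open V" "K \<subseteq> V" "\<And>x. x \<in> V \<Longrightarrow> g x = c" for g V c
  proof -
    have "indicator E x * hpair br deg F g x = 0" for x
    proof (cases "x \<in> E")
      case True
      then have "x \<in> V" using EK V(2) by blast
      then have "Xd br deg j g x = 0" for j by (rule Xd_local[OF G V(1) _ V(3)])
      then show ?thesis by (simp add: hpair_def)
    qed simp
    then have "(\<lambda>x. indicator E x * hpair br deg F g x) = (\<lambda>x. 0::real)" by (rule ext)
    then show ?thesis by simp
  qed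
  have test: "(\<integral>x\<in>E1. h x \<partial>completion mup) = (\<integral>x\<in>E1. h x \<partial>completion mun)"
    if h: "C1fun h" "\<exists>C. compact C \<and> C \<subseteq> W \<and> {x. h x \<noteq> 0} \<subseteq> C" for h
  proof -
    obtain C where C: "compact C" "C \<subseteq> W" "{x. h x \<noteq> 0} \<subseteq> C" using h(2) by blast
    have hC: "C1c \<Omega> h" by (rule C1c_of[OF h(1) C(3) C(1)]) (use C(2) WO in blast)
    have k1: "K \<subseteq> - C" using C(2) WK by blast
    have o1: "open (- C)" using C(1) compact_imp_closed by blast
    have z1: "h x = 0" if "x \<in> - C" for x using that C(3) by blast
    have l0: "(\<integral>x. indicator E x * hpair br deg F h x \<partial>lebesgue) = 0" by (rule lhs0[OF o1 k1 z1])
    have "(\<lambda>x. indicator ?R x *\<^sub>R (h x * Tri x)) = (\<lambda>x. 0)"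
    proof
      fix x show "indicator ?R x *\<^sub>R (h x * Tri x) = 0"
      proof (cases "x \<in> ?R")
        case True
        then have "x \<in> K" using RK by blast
        then have "h x = 0" using C(2,3) WK by blast
        then show ?thesis by simp
      qed simp
    qed
    then have r0: "(\<integral>x\<in>?R. h x * Tri x \<partial>?L) = 0" unfolding set_lebesgue_integral_def by simp
    show ?thesis using int_trace[OF hC] l0 r0 by simp
  qed
  have z: "emeasure (completion mup) (E1 \<inter> W) = 0 \<and> emeasure (completion mun) (E1 \<inter> W) = 0"
    by (rule box_test_zero[OF fin_c[OF Fm(3)] fin_c[OF Fm(6)] spc ssc E1_meas Wo WO Pr Pc test])
  obtain g V where gV: "C1c \<Omega> g" "C1fun g" "open V" "K \<subseteq> V" "\<And>x. x \<in> V \<Longrightarrow> g x = 1"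
    "\<And>x. 0 \<le> g x" "\<And>x. g x \<le> 1"
    by (rule plateau_exists[OF Kc \<Omega> KO]) blast
  have l0: "(\<integral>x. indicator E x * hpair br deg F g x \<partial>lebesgue) = 0" by (rule lhs0[OF gV(3,4,5)])
  have Rg: "(\<integral>x\<in>?R. g x * T x \<partial>?L) = (\<integral>x\<in>?R. T x \<partial>?L)" for T
  proof -
    have "(\<lambda>x. indicator ?R x *\<^sub>R (g x * T x)) = (\<lambda>x. indicator ?R x *\<^sub>R T x)"
    proof
      fix x show "indicator ?R x *\<^sub>R (g x * T x) = indicator ?R x *\<^sub>R T x"
      proof (cases "x \<in> ?R")
        case True
        then have "g x = 1" using RK gV(4,5) by blast
        then show ?thesis by simp
      qed simp
    qed
    then show ?thesis unfolding set_lebesgue_integral_def by simp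
  qed
  have E1O: "E1 \<subseteq> \<Omega>" using E1_sub by blast
  have one: "(\<integral>x\<in>A. g x \<partial>completion M) = measure (completion M) A"
    if M: "space M = \<Omega>" "sets M = sets (restrict_space lborel \<Omega>)"
      "emeasure (completion M) (E1 \<inter> W) = 0" "E1 \<in> sets (completion M)"
      and A: "A \<subseteq> E1 \<union> ?R" for M A
  proof (rule set_int_one[OF cm])
    show "A \<subseteq> space (completion M)" using A RO M(1) E1O by auto
    have "W \<in> sets (restrict_space lborel \<Omega>)" using SB[OF Wo] WO by (simp add: Int_absorb2)
    then have "W \<in> sets (completion M)" using M(2) sets_completionI_sets by blast
    then have "E1 \<inter> W \<in> null_sets (completion M)" using M(3,4) by (intro null_setsI) auto
    then have ae: "AE x in completion M. x \<notin> E1 \<inter> W" by (rule AE_not_in)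
    show "AE x in completion M. x \<in> A \<longrightarrow> g x = 1"
      using ae
    proof (rule eventually_mono)
      fix x assume x: "x \<notin> E1 \<inter> W"
      show "x \<in> A \<longrightarrow> g x = 1"
      proof
        assume "x \<in> A"
        then have "x \<in> K" using A RK E1O x unfolding W_def by blast
        then show "g x = 1" using gV(4,5) by blast
      qed
    qed
  qed
  have zp: "emeasure (completion mup) (E1 \<inter> W) = 0" and zn: "emeasure (completion mun) (E1 \<inter> W) = 0"
    using z by blast+
  have i1: "(\<integral>x\<in>E1. g x \<partial>completion mup) = measure (completion mup) E1"
    by (rule one[OF Fm(1,2) zp E1_meas(1)]) blast
  have i2: "(\<integral>x\<in>E1. g x \<partial>completion mun) = measure (completion mun) E1"
    by (rule one[OF Fm(4,5) zn E1_meas(2)]) blast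
  have e1: "(\<integral>x\<in>E1 \<union> ?R. g x \<partial>completion mup) = measure (completion mup) (E1 \<union> ?R)"
    by (rule one[OF Fm(1,2) zp E1_meas(1)]) blast
  have e2: "(\<integral>x\<in>E1 \<union> ?R. g x \<partial>completion mun) = measure (completion mun) (E1 \<union> ?R)"
    by (rule one[OF Fm(4,5) zn E1_meas(2)]) blast
  have I: "measure (completion mup) E1 - measure (completion mun) E1 = (\<integral>x\<in>?R. Tri x \<partial>?L)"
    using int_trace[OF gV(1)] l0 i1 i2 Rg[of Tri] by simp
  have X: "measure (completion mup) (E1 \<union> ?R) - measure (completion mun) (E1 \<union> ?R) = (\<integral>x\<in>?R. Tre x \<partial>?L)"
    using ext_trace[OF gV(1)] l0 e1 e2 Rg[of Tre] by simp
  show ?thesis using I X by blast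
qed


end
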